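(* For all integers $n\geq 3$ and $k\geq 2$, the digraph $M(n,k)$ is connected-homogeneous.
   Context: Connected-homogeneous: every isomorphism between finite induced subdigraphs whose underlying graphs are connected extends to an automorphism. Construction of $M(n,k)$: let $F=\langle a_1\rangle*\cdots*\langle a_n\rangle$ be the free product of $n$ cyclic groups of order $k$. Form the digraph $T^*$ with vertex set $F\times\{1,\dots,n\}$, arcs in both directions between $(v,i)$ and $(v,j)$ for all $v\in F$ and $i\ne j$ (a copy of $K_n$ for each $v$), and "cycle arcs" $(v,i)\to(va_i,i)$. Form the canonical double cover $T^*\otimes\vec K_2$: vertex set $V T^*\times\{-,+\}$, with an arc $(x,-)\to(y,+)$ whenever $x\to y$ in $T^*$. The cycle arcs $(v,i)\to(va_i,i)$ give arcs $((v,i),-)\to((va_i,i),+)$, which form a bijection between the two levels. $M(n,k)$ is obtained by contracting all of these arcs, i.e. identifying $((v,i),-)$ with $((va_i,i),+)$ for all $v,i$, keeping the remaining arcs $((v,i),-)\to((v,j),+)$ ($i\neq j$) between the resulting vertices. Each reachability class of $M(n,k)$ is a copy of the complement of a perfect matching on $2n$ vertices. *)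

theory Defs
  imports Main
begin

definition digraph_aut :: "'v set \<Rightarrow> ('v \<Rightarrow> 'v \<Rightarrow> bool) \<Rightarrow> ('v \<Rightarrow> 'v) \<Rightarrow> bool" where
  "digraph_aut V A g \<longleftrightarrow> bij_betw g V V \<and> (\<forall>x\<in>V. \<forall>y\<in>V. A x y \<longleftrightarrow> A (g x) (g y))"

definition induced_iso :: "'v set \<Rightarrow> ('v \<Rightarrow> 'v \<Rightarrow> bool) \<Rightarrow> 'v set \<Rightarrow> 'v set \<Rightarrow> ('v \<Rightarrow> 'v) \<Rightarrow> bool" where
  "induced_iso V A X Y f \<longleftrightarrow> X \<subseteq> V \<and> Y \<subseteq> V \<and> bij_betw f X Y \<and>
     (\<forall>x\<in>X. \<forall>y\<in>X. A x y \<longleftrightarrow> A (f x) (f y))"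

definition underlying_connected :: "('v \<Rightarrow> 'v \<Rightarrow> bool) \<Rightarrow> 'v set \<Rightarrow> bool" where
  "underlying_connected A X \<longleftrightarrow>
     (\<forall>x\<in>X. \<forall>y\<in>X. (x, y) \<in> {(u, w). u \<in> X \<and> w \<in> X \<and> (A u w \<or> A w u)}\<^sup>*)"

definition connected_homogeneous :: "'v set \<Rightarrow> ('v \<Rightarrow> 'v \<Rightarrow> bool) \<Rightarrow> bool" where
  "connected_homogeneous V A \<longleftrightarrow>
     (\<forall>X Y f. finite X \<and> underlying_connected A X \<and> induced_iso V A X Y f \<longrightarrow>
        (\<exists>g. digraph_aut V A g \<and> (\<forall>x\<in>X. g x = f x)))"

text \<open>Elements are reduced words: lists of letters (i, e) meaning a_i^e with
  i < n, 0 < e < k, and consecutive letters having distinct generator indices.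
  Generators are indexed 0..n-1.\<close>

definition reduced_word :: "nat \<Rightarrow> nat \<Rightarrow> (nat \<times> nat) list \<Rightarrow> bool" where
  "reduced_word n k w \<longleftrightarrow> (\<forall>p\<in>set w. fst p < n \<and> 0 < snd p \<and> snd p < k) \<and>
     (\<forall>m. Suc m < length w \<longrightarrow> fst (w ! m) \<noteq> fst (w ! Suc m))"

text \<open>right multiplication by the generator a_j\<close>
definition mul_gen :: "nat \<Rightarrow> (nat \<times> nat) list \<Rightarrow> nat \<Rightarrow> (nat \<times> nat) list" where
  "mul_gen k w j =
     (if w \<noteq> [] \<and> fst (last w) = j
      then (if Suc (snd (last w)) = k then butlast w else butlast w @ [(j, Suc (snd (last w)))])
      else w @ [(j, 1)])"

text \<open>Vertices of the double cover T* (x) K_2: ((v,i), s), s = False for level -,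
  s = True for level +.\<close>
type_synonym dc_vertex = "((nat \<times> nat) list \<times> nat) \<times> bool"

text \<open>Non-cycle arcs of the double cover: ((v,i),-) -> ((v,j),+) for i \<noteq> j.\<close>
definition dc_arc :: "nat \<Rightarrow> nat \<Rightarrow> dc_vertex \<Rightarrow> dc_vertex \<Rightarrow> bool" where
  "dc_arc n k x y \<longleftrightarrow> (\<exists>v i j. reduced_word n k v \<and> i < n \<and> j < n \<and> i \<noteq> j \<and>
      x = ((v, i), False) \<and> y = ((v, j), True))"

text \<open>Contraction class of the cycle arc ((v,i),-) -> ((v a_i, i),+).\<close>
definition M_class :: "nat \<Rightarrow> (nat \<times> nat) list \<Rightarrow> nat \<Rightarrow> dc_vertex set" where
  "M_class k v i = {((v, i), False), ((mul_gen k v i, i), True)}"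

definition M_vertices :: "nat \<Rightarrow> nat \<Rightarrow> dc_vertex set set" where
  "M_vertices n k = {M_class k v i | v i. reduced_word n k v \<and> i < n}"

definition M_arc :: "nat \<Rightarrow> nat \<Rightarrow> dc_vertex set \<Rightarrow> dc_vertex set \<Rightarrow> bool" where
  "M_arc n k C D \<longleftrightarrow> (\<exists>x\<in>C. \<exists>y\<in>D. dc_arc n k x y)"

end

theory Submission
  imports Defs
begin

lemma aut_id: "digraph_aut V A id"
  by (simp add: digraph_aut_def)

lemma aut_comp:
  assumes "digraph_aut V A g" "digraph_aut V A h"
  shows "digraph_aut V A (g \<circ> h)"
proof -
  have bg: "bij_betw g V V" and bh: "bij_betw h V V" using assms by (auto simp: digraph_aut_def)
  have "bij_betw (g \<circ> h) V V" using bij_betw_trans[OF bh bg] .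
  moreover have "\<forall>x\<in>V. \<forall>y\<in>V. A x y \<longleftrightarrow> A ((g \<circ> h) x) ((g \<circ> h) y)"
  proof (intro ballI)
    fix x y assume "x \<in> V" "y \<in> V"
    then have "h x \<in> V" "h y \<in> V" using bh by (auto simp: bij_betw_def)
    then show "A x y \<longleftrightarrow> A ((g \<circ> h) x) ((g \<circ> h) y)"
      using assms \<open>x \<in> V\<close> \<open>y \<in> V\<close> by (simp add: digraph_aut_def)
  qed
  ultimately show ?thesis by (simp add: digraph_aut_def)
qed

lemma aut_inv:
  assumes "digraph_aut V A g"
  shows "digraph_aut V A (inv_into V g)" "\<And>x. x \<in> V \<Longrightarrow> inv_into V g (g x) = x"
    "\<And>x. x \<in> V \<Longrightarrow> g (inv_into V g x) = x" "\<And>x. x \<in> V \<Longrightarrow> inv_into V g x \<in> V"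
proof -
  have bg: "bij_betw g V V" using assms by (auto simp: digraph_aut_def)
  show l: "\<And>x. x \<in> V \<Longrightarrow> inv_into V g (g x) = x" using bg bij_betw_inv_into_left by metis
  show r: "\<And>x. x \<in> V \<Longrightarrow> g (inv_into V g x) = x" using bg bij_betw_inv_into_right by metis
  have bi: "bij_betw (inv_into V g) V V" using bij_betw_inv_into[OF bg] .
  show m: "\<And>x. x \<in> V \<Longrightarrow> inv_into V g x \<in> V" using bi by (auto simp: bij_betw_def)
  show "digraph_aut V A (inv_into V g)"
    unfolding digraph_aut_def
  proof (intro conjI bi ballI)
    fix x y assume "x \<in> V" "y \<in> V"
    then show "A x y \<longleftrightarrow> A (inv_into V g x) (inv_into V g y)"
      using assms m r by (metis digraph_aut_def)
  qed
qed

definition UR :: "('v \<Rightarrow> 'v \<Rightarrow> bool) \<Rightarrow> 'v set \<Rightarrow> ('v \<times> 'v) set" where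
  "UR A X = {(u, w). u \<in> X \<and> w \<in> X \<and> (A u w \<or> A w u)}"

lemma crossing:
  assumes "(a, b) \<in> (UR A X)\<^sup>*" "a \<in> S" "b \<notin> S"
  shows "\<exists>u\<in>S. \<exists>w. w \<notin> S \<and> (u, w) \<in> UR A X"
  using assms
proof (induction rule: rtrancl_induct)
  case base then show ?case by simp
next
  case (step y z)
  show ?case
  proof (cases "y \<in> S")
    case True then show ?thesis using step by blast
  next
    case False then show ?thesis using step by blast
  qed
qed

lemma connected_insert:
  assumes "underlying_connected A S" "z \<in> S" "A z y \<or> A y z"
  shows "underlying_connected A (insert y S)"
proof -
  have sub: "UR A S \<subseteq> UR A (insert y S)" by (auto simp: UR_def)
  have e: "(y, z) \<in> UR A (insert y S)" "(z, y) \<in> UR A (insert y S)" using assms(2,3) by (auto simp: UR_def)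
  have S: "\<And>a b. a \<in> S \<Longrightarrow> b \<in> S \<Longrightarrow> (a, b) \<in> (UR A (insert y S))\<^sup>*"
    using assms(1) rtrancl_mono[OF sub] unfolding underlying_connected_def UR_def[symmetric] by blast
  show ?thesis unfolding underlying_connected_def UR_def[symmetric]
  proof (intro ballI)
    fix a b assume a: "a \<in> insert y S" and b: "b \<in> insert y S"
    have az: "(a, z) \<in> (UR A (insert y S))\<^sup>*" using a S[OF _ assms(2)] e by auto
    have zb: "(z, b) \<in> (UR A (insert y S))\<^sup>*" using b S[OF assms(2)] e by auto
    show "(a, b) \<in> (UR A (insert y S))\<^sup>*" using az zb by simp
  qed
qed

lemma ch_from_ext:
  assumes trans: "\<And>x x'. x \<in> V \<Longrightarrow> x' \<in> V \<Longrightarrow> \<exists>g. digraph_aut V A g \<and> g x = x'"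
  and ext: "\<And>S z x x'. S \<subseteq> V \<Longrightarrow> underlying_connected A S \<Longrightarrow> z \<in> S \<Longrightarrow> x \<in> V \<Longrightarrow> x \<notin> S
     \<Longrightarrow> x' \<in> V \<Longrightarrow> x' \<notin> S \<Longrightarrow> (\<forall>y\<in>S. (A x y \<longleftrightarrow> A x' y) \<and> (A y x \<longleftrightarrow> A y x'))
     \<Longrightarrow> A x z \<or> A z x \<Longrightarrow> \<exists>g. digraph_aut V A g \<and> (\<forall>y\<in>S. g y = y) \<and> g x = x'"
  shows "connected_homogeneous V A"
  unfolding connected_homogeneous_def
proof (intro allI impI)
  fix X Y f
  assume H: "finite X \<and> underlying_connected A X \<and> induced_iso V A X Y f"
  then have fin: "finite X" and con: "underlying_connected A X" and XV: "X \<subseteq> V" and YV: "Y \<subseteq> V"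
    and bf: "bij_betw f X Y" and iso: "\<forall>x\<in>X. \<forall>y\<in>X. A x y \<longleftrightarrow> A (f x) (f y)"
    by (auto simp: induced_iso_def)
  have fV: "\<And>x. x \<in> X \<Longrightarrow> f x \<in> V" using bf YV by (auto simp: bij_betw_def)
  have finj: "inj_on f X" using bf by (auto simp: bij_betw_def)
  have claim: "\<And>m. 1 \<le> m \<Longrightarrow> m \<le> card X \<Longrightarrow> \<exists>S\<subseteq>X. card S = m \<and> underlying_connected A S \<and>
       (\<exists>g. digraph_aut V A g \<and> (\<forall>s\<in>S. g s = f s))"
  proof -
    fix m :: nat
    show "1 \<le> m \<Longrightarrow> m \<le> card X \<Longrightarrow> \<exists>S\<subseteq>X. card S = m \<and> underlying_connected A S \<and>
       (\<exists>g. digraph_aut V A g \<and> (\<forall>s\<in>S. g s = f s))"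
    proof (induction m)
      case 0 then show ?case by simp
    next
      case (Suc m)
      show ?case
      proof (cases "m = 0")
        case True
        then have "X \<noteq> {}" using Suc by auto
        then obtain x0 where x0: "x0 \<in> X" by auto
        obtain g where g: "digraph_aut V A g" "g x0 = f x0" using trans[of x0 "f x0"] x0 XV fV by auto
        have "underlying_connected A {x0}" by (simp add: underlying_connected_def)
        then show ?thesis using x0 g True by (intro exI[of _ "{x0}"]) auto
      next
        case False
        then obtain S g where S: "S \<subseteq> X" "card S = m" "underlying_connected A S"
          and g: "digraph_aut V A g" "\<forall>s\<in>S. g s = f s" using Suc by auto
        have finS: "finite S" using S(1) fin finite_subset by auto
        have "S \<noteq> {}" using S(2) False by auto
        then obtain s where s: "s \<in> S" by auto
        have "S \<noteq> X" using S(2) Suc.prems by auto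
        then obtain y0 where y0: "y0 \<in> X" "y0 \<notin> S" using S(1) by auto
        have "(s, y0) \<in> (UR A X)\<^sup>*" using con s S(1) y0 unfolding underlying_connected_def UR_def by blast
        from crossing[OF this s y0(2)] obtain z y where zy: "z \<in> S" "y \<notin> S" "(z, y) \<in> UR A X" by blast
        have yX: "y \<in> X" and adj: "A z y \<or> A y z" using zy(3) by (auto simp: UR_def)
        have SV: "S \<subseteq> V" using S(1) XV by auto
        define h where "h = inv_into V g"
        have hA: "digraph_aut V A h" using aut_inv(1)[OF g(1)] h_def by simp
        have hg: "\<And>x. x \<in> V \<Longrightarrow> h (g x) = x" using aut_inv(2)[OF g(1)] h_def by simp
        have gh: "\<And>x. x \<in> V \<Longrightarrow> g (h x) = x" using aut_inv(3)[OF g(1)] h_def by simp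
        have hV: "\<And>x. x \<in> V \<Longrightarrow> h x \<in> V" using aut_inv(4)[OF g(1)] h_def by simp
        have fyV: "f y \<in> V" using fV yX .
        define x' where "x' = h (f y)"
        have x'V: "x' \<in> V" using hV fyV x'_def by simp
        have hAr: "\<And>a b. a \<in> V \<Longrightarrow> b \<in> V \<Longrightarrow> A a b \<longleftrightarrow> A (h a) (h b)" using hA by (simp add: digraph_aut_def)
        have nb: "\<forall>t\<in>S. (A y t \<longleftrightarrow> A x' t) \<and> (A t y \<longleftrightarrow> A t x')"
        proof
          fix t assume t: "t \<in> S"
          have tX: "t \<in> X" using t S(1) by auto
          have tV: "t \<in> V" using tX XV by auto
          have ft: "f t = g t" using g(2) t by simp
          have hft: "h (f t) = t" using ft hg tV by simp
          have "A y t \<longleftrightarrow> A (f y) (f t)" using iso yX tX by simp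
          also have "\<dots> \<longleftrightarrow> A x' t" using hAr[OF fyV fV[OF tX]] hft x'_def by simp
          finally have 1: "A y t \<longleftrightarrow> A x' t" .
          have "A t y \<longleftrightarrow> A (f t) (f y)" using iso yX tX by simp
          also have "\<dots> \<longleftrightarrow> A t x'" using hAr[OF fV[OF tX] fyV] hft x'_def by simp
          finally show "(A y t \<longleftrightarrow> A x' t) \<and> (A t y \<longleftrightarrow> A t x')" using 1 by simp
        qed
        have x'S: "x' \<notin> S"
        proof
          assume "x' \<in> S"
          then have "g x' = f x'" using g(2) by simp
          moreover have "g x' = f y" using gh fyV x'_def by simp
          ultimately have "f x' = f y" by simp
          then have "x' = y" using finj yX \<open>x' \<in> S\<close> S(1) by (auto simp: inj_on_def)
          then show False using zy(2) \<open>x' \<in> S\<close> by simp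
        qed
        obtain g' where g': "digraph_aut V A g'" "\<forall>t\<in>S. g' t = t" "g' y = x'"
          using ext[OF SV S(3) zy(1) _ zy(2) x'V x'S nb] yX XV adj by blast
        have "digraph_aut V A (g \<circ> g')" using aut_comp[OF g(1) g'(1)] .
        moreover have "\<forall>t\<in>insert y S. (g \<circ> g') t = f t"
          using g'(2,3) g(2) gh fyV x'_def by auto
        moreover have "card (insert y S) = Suc m" using finS zy(2) S(2) by simp
        moreover have "underlying_connected A (insert y S)"
          using connected_insert[OF S(3) zy(1)] adj by blast
        moreover have "insert y S \<subseteq> X" using yX S(1) by simp
        ultimately show ?thesis by blast
      qed
    qed
  qed
  show "\<exists>g. digraph_aut V A g \<and> (\<forall>x\<in>X. g x = f x)"
  proof (cases "X = {}")
    case True then show ?thesis using aut_id by blast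
  next
    case False
    then have "1 \<le> card X" using fin by (simp add: Suc_leI card_gt_0_iff)
    from claim[OF this order_refl] obtain S g where "S \<subseteq> X" "card S = card X"
      "digraph_aut V A g" "\<forall>s\<in>S. g s = f s" by blast
    then have "S = X" using fin card_subset_eq by blast
    then show ?thesis using \<open>digraph_aut V A g\<close> \<open>\<forall>s\<in>S. g s = f s\<close> by blast
  qed
qed

lemma ch_cong:
  assumes "\<forall>x\<in>V. \<forall>y\<in>V. A x y = B x y"
  shows "connected_homogeneous V A = connected_homogeneous V B"
proof -
  have a: "\<And>g. digraph_aut V A g = digraph_aut V B g"
    using assms unfolding digraph_aut_def bij_betw_def by (metis image_eqI)
  have i: "\<And>X Y f. induced_iso V A X Y f = induced_iso V B X Y f"
    using assms unfolding induced_iso_def bij_betw_def by (metis image_eqI subsetD)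
  have c: "\<And>X. X \<subseteq> V \<Longrightarrow> underlying_connected A X = underlying_connected B X"
  proof -
    fix X :: "'a set" assume "X \<subseteq> V"
    then have "{(u, w). u \<in> X \<and> w \<in> X \<and> (A u w \<or> A w u)} = {(u, w). u \<in> X \<and> w \<in> X \<and> (B u w \<or> B w u)}"
      using assms by auto
    then show "underlying_connected A X = underlying_connected B X"
      by (simp add: underlying_connected_def)
  qed
  show ?thesis unfolding connected_homogeneous_def
    using a i c by (metis induced_iso_def)
qed


lemma rtrancl_map:
  assumes "\<And>u w. (u, w) \<in> R \<Longrightarrow> (p u, p w) \<in> R'" "(a, b) \<in> R\<^sup>*"
  shows "(p a, p b) \<in> R'\<^sup>*"
  using assms(2)
proof (induction rule: rtrancl_induct)
  case base then show ?case by simp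
next
  case (step y z) then show ?case using assms(1) by (meson rtrancl.rtrancl_into_rtrancl)
qed

lemma ch_transfer:
  assumes inj: "inj_on h D" and ch: "connected_homogeneous D (\<lambda>x y. A (h x) (h y))"
  shows "connected_homogeneous (h ` D) A"
  unfolding connected_homogeneous_def
proof (intro allI impI)
  fix X Y f
  assume H: "finite X \<and> underlying_connected A X \<and> induced_iso (h ` D) A X Y f"
  then have fin: "finite X" and con: "underlying_connected A X" and XV: "X \<subseteq> h ` D" and YV: "Y \<subseteq> h ` D"
    and bf: "bij_betw f X Y" and iso: "\<forall>x\<in>X. \<forall>y\<in>X. A x y \<longleftrightarrow> A (f x) (f y)"
    by (auto simp: induced_iso_def)
  define B where "B = (\<lambda>x y. A (h x) (h y))"
  define ih where "ih = inv_into D h"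
  have hih: "\<And>x. x \<in> h ` D \<Longrightarrow> h (ih x) = x" unfolding ih_def by (simp add: f_inv_into_f)
  have ihh: "\<And>x. x \<in> D \<Longrightarrow> ih (h x) = x" unfolding ih_def using inj by (simp add: inv_into_f_f)
  have ihD: "\<And>x. x \<in> h ` D \<Longrightarrow> ih x \<in> D" unfolding ih_def by (simp add: inv_into_into)
  define X0 where "X0 = ih ` X"
  define Y0 where "Y0 = ih ` Y"
  define f0 where "f0 = ih \<circ> f \<circ> h"
  have X0D: "X0 \<subseteq> D" using XV ihD X0_def by auto
  have Y0D: "Y0 \<subseteq> D" using YV ihD Y0_def by auto
  have b1: "bij_betw h X0 X"
    unfolding bij_betw_def
  proof
    show "inj_on h X0" using inj X0D inj_on_subset by blast
    show "h ` X0 = X" using XV hih X0_def by (force simp: image_image)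
  qed
  have b2: "bij_betw ih Y Y0"
    unfolding bij_betw_def Y0_def
    using YV hih by (metis inj_on_def subsetD)
  have bf0: "bij_betw f0 X0 Y0" unfolding f0_def using bij_betw_trans[OF bij_betw_trans[OF b1 bf] b2] by (simp add: comp_assoc)
  have fY: "\<And>x. x \<in> X \<Longrightarrow> f x \<in> h ` D" using bf YV by (auto simp: bij_betw_def)
  have iso0: "\<forall>x\<in>X0. \<forall>y\<in>X0. B x y \<longleftrightarrow> B (f0 x) (f0 y)"
  proof (intro ballI)
    fix x y assume "x \<in> X0" "y \<in> X0"
    then have "h x \<in> X" "h y \<in> X" using b1 by (auto simp: bij_betw_def)
    then show "B x y \<longleftrightarrow> B (f0 x) (f0 y)" using iso fY hih unfolding B_def f0_def by simp
  qed
  have con0: "underlying_connected B X0"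
    unfolding underlying_connected_def
  proof (intro ballI)
    fix a b assume a: "a \<in> X0" and b: "b \<in> X0"
    have "(h a, h b) \<in> (UR A X)\<^sup>*" using con a b b1 unfolding underlying_connected_def UR_def bij_betw_def by blast
    moreover have "\<And>u w. (u, w) \<in> UR A X \<Longrightarrow> (ih u, ih w) \<in> UR B X0"
      using XV hih unfolding UR_def B_def X0_def by (auto simp: subset_iff)
    ultimately have "(ih (h a), ih (h b)) \<in> (UR B X0)\<^sup>*" using rtrancl_map by metis
    then show "(a, b) \<in> {(u, w). u \<in> X0 \<and> w \<in> X0 \<and> (B u w \<or> B w u)}\<^sup>*"
    proof -
      have "ih (h a) = a" "ih (h b) = b" using a b X0D ihh by auto
      then show ?thesis using \<open>(ih (h a), ih (h b)) \<in> (UR B X0)\<^sup>*\<close> unfolding UR_def by simp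
    qed
  qed
  have "induced_iso D B X0 Y0 f0" using X0D Y0D bf0 iso0 by (simp add: induced_iso_def)
  then obtain g0 where g0: "digraph_aut D B g0" "\<forall>x\<in>X0. g0 x = f0 x"
    using ch fin con0 unfolding connected_homogeneous_def B_def X0_def by blast
  define g where "g = h \<circ> g0 \<circ> ih"
  have bh: "bij_betw h D (h ` D)" using inj by (simp add: bij_betw_imageI)
  have bih: "bij_betw ih (h ` D) D" unfolding ih_def using bij_betw_inv_into[OF bh] .
  have bg0: "bij_betw g0 D D" using g0(1) by (simp add: digraph_aut_def)
  have "bij_betw g (h ` D) (h ` D)" unfolding g_def using bij_betw_trans[OF bij_betw_trans[OF bih bg0] bh] by (simp add: comp_assoc)
  moreover have "\<forall>x\<in>h ` D. \<forall>y\<in>h ` D. A x y \<longleftrightarrow> A (g x) (g y)"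
  proof (intro ballI)
    fix x y assume x: "x \<in> h ` D" and y: "y \<in> h ` D"
    have "A x y \<longleftrightarrow> B (ih x) (ih y)" using hih x y B_def by simp
    also have "\<dots> \<longleftrightarrow> B (g0 (ih x)) (g0 (ih y))" using g0(1) ihD x y by (simp add: digraph_aut_def)
    finally show "A x y \<longleftrightarrow> A (g x) (g y)" unfolding g_def B_def by simp
  qed
  moreover have "\<forall>x\<in>X. g x = f x"
  proof
    fix x assume x: "x \<in> X"
    have "ih x \<in> X0" using x X0_def by simp
    then have "g0 (ih x) = ih (f (h (ih x)))" using g0(2) f0_def by simp
    then show "g x = f x" unfolding g_def using hih x XV fY by auto
  qed
  ultimately show "\<exists>g. digraph_aut (h ` D) A g \<and> (\<forall>x\<in>X. g x = f x)" by (auto simp: digraph_aut_def)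
qed


lemma red_Nil[simp]: "reduced_word n k []"
  by (simp add: reduced_word_def)

lemma red_Cons:
  "reduced_word n k (p # w) \<longleftrightarrow> (fst p < n \<and> 0 < snd p \<and> snd p < k) \<and> reduced_word n k w \<and>
     (w \<noteq> [] \<longrightarrow> fst p \<noteq> fst (hd w))"
proof -
  have "(\<forall>m. Suc m < length (p # w) \<longrightarrow> fst ((p # w) ! m) \<noteq> fst ((p # w) ! Suc m)) \<longleftrightarrow>
        (w \<noteq> [] \<longrightarrow> fst p \<noteq> fst (hd w)) \<and> (\<forall>m. Suc m < length w \<longrightarrow> fst (w ! m) \<noteq> fst (w ! Suc m))"
  proof
    assume H: "\<forall>m. Suc m < length (p # w) \<longrightarrow> fst ((p # w) ! m) \<noteq> fst ((p # w) ! Suc m)"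
    have 1: "w \<noteq> [] \<longrightarrow> fst p \<noteq> fst (hd w)"
      using H[rule_format, of 0] by (cases w) auto
    have 2: "\<forall>m. Suc m < length w \<longrightarrow> fst (w ! m) \<noteq> fst (w ! Suc m)"
      using H by (metis Suc_less_eq length_Cons nth_Cons_Suc)
    show "(w \<noteq> [] \<longrightarrow> fst p \<noteq> fst (hd w)) \<and> (\<forall>m. Suc m < length w \<longrightarrow> fst (w ! m) \<noteq> fst (w ! Suc m))"
      using 1 2 by blast
  next
    assume H: "(w \<noteq> [] \<longrightarrow> fst p \<noteq> fst (hd w)) \<and> (\<forall>m. Suc m < length w \<longrightarrow> fst (w ! m) \<noteq> fst (w ! Suc m))"
    show "\<forall>m. Suc m < length (p # w) \<longrightarrow> fst ((p # w) ! m) \<noteq> fst ((p # w) ! Suc m)"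
    proof (intro allI impI)
      fix m assume m: "Suc m < length (p # w)"
      show "fst ((p # w) ! m) \<noteq> fst ((p # w) ! Suc m)"
      proof (cases m)
        case 0 then show ?thesis using H m by (cases w) auto
      next
        case (Suc m') then show ?thesis using H m by auto
      qed
    qed
  qed
  then show ?thesis unfolding reduced_word_def by auto
qed

lemma red_snoc:
  "reduced_word n k (w @ [p]) \<longleftrightarrow> reduced_word n k w \<and> (fst p < n \<and> 0 < snd p \<and> snd p < k) \<and>
     (w \<noteq> [] \<longrightarrow> fst (last w) \<noteq> fst p)"
proof (induction w)
  case Nil then show ?case by (simp add: red_Cons)
next
  case (Cons a w) then show ?case by (cases w) (auto simp: red_Cons)
qed

definition post :: "nat \<Rightarrow> nat \<times> nat \<Rightarrow> nat \<Rightarrow> (nat \<times> nat) list" where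
  "post k q j = (if fst q = j then (if Suc (snd q) = k then [] else [(j, Suc (snd q))]) else [q, (j, 1)])"

lemma mul_gen_Nil[simp]: "mul_gen k [] j = [(j, 1)]"
  by (simp add: mul_gen_def)

lemma mul_gen_snoc: "mul_gen k (w @ [q]) j = w @ post k q j"
  by (simp add: mul_gen_def post_def)

definition lmul :: "nat \<Rightarrow> nat \<Rightarrow> (nat \<times> nat) list \<Rightarrow> (nat \<times> nat) list" where
  "lmul k c w = (if w \<noteq> [] \<and> fst (hd w) = c
      then (if Suc (snd (hd w)) = k then tl w else (c, Suc (snd (hd w))) # tl w)
      else (c, 1) # w)"

definition lmul_inv :: "nat \<Rightarrow> nat \<Rightarrow> (nat \<times> nat) list \<Rightarrow> (nat \<times> nat) list" where
  "lmul_inv k c w = (if w \<noteq> [] \<and> fst (hd w) = c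
      then (if snd (hd w) = 1 then tl w else (c, snd (hd w) - 1) # tl w)
      else (c, k - 1) # w)"

definition pre :: "nat \<Rightarrow> nat \<Rightarrow> nat \<times> nat \<Rightarrow> (nat \<times> nat) list" where
  "pre k c p = (if fst p = c then (if Suc (snd p) = k then [] else [(c, Suc (snd p))]) else [(c, 1), p])"

lemma lmul_Nil[simp]: "lmul k c [] = [(c, 1)]"
  by (simp add: lmul_def)

lemma lmul_Cons: "lmul k c (p # r) = pre k c p @ r"
  by (simp add: lmul_def pre_def)

lemma mul_gen_red:
  assumes "reduced_word n k w" "j < n" "2 \<le> k"
  shows "reduced_word n k (mul_gen k w j)"
proof (cases w rule: rev_exhaust)
  case Nil then show ?thesis using assms by (simp add: red_Cons)
next
  case (snoc w' q)
  have e: "mul_gen k w j = w' @ post k q j" using snoc mul_gen_snoc by simp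
  have r: "reduced_word n k w'" "fst q < n" "0 < snd q" "snd q < k" "w' \<noteq> [] \<longrightarrow> fst (last w') \<noteq> fst q"
    using assms snoc by (auto simp: red_snoc)
  show ?thesis
  proof (cases "fst q = j")
    case True then show ?thesis using e r assms by (auto simp: post_def red_snoc)
  next
    case False
    then have "mul_gen k w j = (w' @ [q]) @ [(j, 1)]" using e by (simp add: post_def)
    then show ?thesis using r assms False by (simp only: red_snoc) auto
  qed
qed

lemma mul_gen_empty:
  assumes "reduced_word n k w" "2 \<le> k"
  shows "mul_gen k w j = [] \<longleftrightarrow> w = [(j, k - 1)]"
proof (cases w rule: rev_exhaust)
  case Nil then show ?thesis by simp
next
  case (snoc w' q)
  then show ?thesis using assms
    by (cases q) (auto simp: mul_gen_snoc post_def red_snoc)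
qed

lemma mul_gen_hd:
  assumes "w \<noteq> []" "mul_gen k w j \<noteq> []"
  shows "fst (hd (mul_gen k w j)) = fst (hd w)"
proof (cases w rule: rev_exhaust)
  case Nil then show ?thesis using assms by simp
next
  case (snoc w' q)
  have e: "mul_gen k w j = w' @ post k q j" using snoc mul_gen_snoc by simp
  show ?thesis
  proof (cases "w' = []")
    case True then show ?thesis using assms e snoc by (auto simp: post_def split: if_splits)
  next
    case False then show ?thesis using e snoc by simp
  qed
qed

lemma lmul_red:
  assumes "reduced_word n k w" "c < n" "2 \<le> k"
  shows "reduced_word n k (lmul k c w)"
proof (cases w)
  case Nil then show ?thesis using assms by (simp add: red_Cons)
next
  case (Cons p r)
  then show ?thesis using assms
    by (auto simp: lmul_Cons pre_def red_Cons)
qed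

lemma lmul_inv_red:
  assumes "reduced_word n k w" "c < n" "2 \<le> k"
  shows "reduced_word n k (lmul_inv k c w)"
proof (cases w)
  case Nil then show ?thesis using assms by (simp add: red_Cons lmul_inv_def)
next
  case (Cons p r)
  then show ?thesis using assms
    by (auto simp: lmul_inv_def red_Cons)
qed

lemma lmul_inv_lmul:
  assumes "reduced_word n k w" "2 \<le> k"
  shows "lmul_inv k c (lmul k c w) = w"
proof (cases w)
  case Nil then show ?thesis using assms by (simp add: lmul_inv_def)
next
  case (Cons p r)
  then show ?thesis using assms
    by (cases r) (auto simp: lmul_Cons pre_def lmul_inv_def red_Cons)
qed

lemma lmul_lmul_inv:
  assumes "reduced_word n k w" "2 \<le> k"
  shows "lmul k c (lmul_inv k c w) = w"
proof (cases w)
  case Nil then show ?thesis using assms by (simp add: lmul_inv_def lmul_Cons pre_def)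
next
  case (Cons p r)
  then show ?thesis using assms
    by (cases r; cases p) (auto simp: lmul_Cons pre_def lmul_inv_def red_Cons)
qed

lemma lmul_mul_gen:
  assumes "reduced_word n k w" "2 \<le> k"
  shows "lmul k c (mul_gen k w j) = mul_gen k (lmul k c w) j"
proof (cases w)
  case Nil then show ?thesis using assms
    by (auto simp: lmul_Cons pre_def mul_gen_def)
next
  case (Cons p r)
  show ?thesis
  proof (cases r rule: rev_exhaust)
    case Nil
    then show ?thesis using Cons assms
      by (cases p) (auto simp: lmul_Cons pre_def mul_gen_def red_Cons)
  next
    case (snoc m q)
    have w: "w = p # m @ [q]" using Cons snoc by simp
    have "lmul k c (mul_gen k w j) = pre k c p @ m @ post k q j"
      unfolding w using mul_gen_snoc[of k "p # m" q j] by (simp add: lmul_Cons)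
    also have "\<dots> = mul_gen k (lmul k c w) j"
      unfolding w lmul_Cons using mul_gen_snoc[of k "pre k c p @ m" q j] by simp
    finally show ?thesis .
  qed
qed


definition DD :: "nat \<Rightarrow> nat \<Rightarrow> ((nat \<times> nat) list \<times> nat) set" where
  "DD n k = {(v, i). reduced_word n k v \<and> i < n}"

definition arcD :: "nat \<Rightarrow> ((nat \<times> nat) list \<times> nat) \<Rightarrow> ((nat \<times> nat) list \<times> nat) \<Rightarrow> bool" where
  "arcD k x y \<longleftrightarrow> snd x \<noteq> snd y \<and> mul_gen k (fst y) (snd y) = fst x"

definition LL :: "nat \<Rightarrow> nat \<Rightarrow> ((nat \<times> nat) list \<times> nat) \<Rightarrow> ((nat \<times> nat) list \<times> nat)" where
  "LL k c x = (lmul k c (fst x), snd x)"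

definition LLi :: "nat \<Rightarrow> nat \<Rightarrow> ((nat \<times> nat) list \<times> nat) \<Rightarrow> ((nat \<times> nat) list \<times> nat)" where
  "LLi k c x = (lmul_inv k c (fst x), snd x)"

lemma DD_iff: "x \<in> DD n k \<longleftrightarrow> reduced_word n k (fst x) \<and> snd x < n"
  by (cases x) (simp add: DD_def)

context
  fixes n k :: nat
  assumes k2: "2 \<le> k"
begin

lemma aut_LL:
  assumes c: "c < n"
  shows "digraph_aut (DD n k) (arcD k) (LL k c)"
  unfolding digraph_aut_def
proof
  show "bij_betw (LL k c) (DD n k) (DD n k)"
  proof (rule bij_betw_byWitness[where f' = "LLi k c"])
    show "LL k c ` DD n k \<subseteq> DD n k" using lmul_red[OF _ c k2] by (auto simp: DD_iff LL_def)
    show "LLi k c ` DD n k \<subseteq> DD n k" using lmul_inv_red[OF _ c k2] by (auto simp: DD_iff LLi_def)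
    show "\<forall>x\<in>DD n k. LLi k c (LL k c x) = x"
      using lmul_inv_lmul[OF _ k2] by (auto simp: DD_iff LL_def LLi_def)
    show "\<forall>x\<in>DD n k. LL k c (LLi k c x) = x"
      using lmul_lmul_inv[OF _ k2] by (auto simp: DD_iff LL_def LLi_def)
  qed
  show "\<forall>x\<in>DD n k. \<forall>y\<in>DD n k. arcD k x y = arcD k (LL k c x) (LL k c y)"
  proof (intro ballI)
    fix x y assume x: "x \<in> DD n k" and y: "y \<in> DD n k"
    have ry: "reduced_word n k (mul_gen k (fst y) (snd y))" using mul_gen_red[OF _ _ k2] y by (simp add: DD_iff)
    have rx: "reduced_word n k (fst x)" using x by (simp add: DD_iff)
    have "mul_gen k (lmul k c (fst y)) (snd y) = lmul k c (fst x) \<longleftrightarrow>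
          lmul k c (mul_gen k (fst y) (snd y)) = lmul k c (fst x)"
      using lmul_mul_gen[OF _ k2, of n "fst y" c "snd y"] y by (simp add: DD_iff)
    also have "\<dots> \<longleftrightarrow> mul_gen k (fst y) (snd y) = fst x"
      using lmul_inv_lmul[OF ry k2, of c] lmul_inv_lmul[OF rx k2, of c] by metis
    finally show "arcD k x y = arcD k (LL k c x) (LL k c y)"
      by (simp add: arcD_def LL_def)
  qed
qed

lemma aut_pow:
  assumes "digraph_aut V A g"
  shows "digraph_aut V A (g ^^ e)"
proof (induction e)
  case 0 then show ?case using aut_id by (simp add: id_def[symmetric])
next
  case (Suc e) then show ?case using aut_comp[OF assms Suc] by (simp add: comp_def)
qed

lemma lmul_pow:
  assumes "0 < e" "e < k" "r = [] \<or> fst (hd r) \<noteq> c"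
  shows "(lmul k c ^^ e) r = (c, e) # r"
  using assms
proof (induction e)
  case 0 then show ?case by simp
next
  case (Suc e)
  show ?case
  proof (cases "e = 0")
    case True then show ?thesis using Suc.prems by (cases r) (auto simp: lmul_Cons pre_def)
  next
    case False
    then have "(lmul k c ^^ e) r = (c, e) # r" using Suc by simp
    then show ?thesis using Suc.prems by (simp add: lmul_Cons pre_def)
  qed
qed

lemma LL_pow: "(LL k c ^^ e) x = ((lmul k c ^^ e) (fst x), snd x)"
  by (induction e) (auto simp: LL_def)

lemma trans_root:
  assumes "reduced_word n k b"
  shows "\<exists>T. digraph_aut (DD n k) (arcD k) T \<and> (\<forall>i<n. T ([], i) = (b, i))"
  using assms
proof (induction b)
  case Nil then show ?case using aut_id by (metis id_apply)
next
  case (Cons p r)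
  obtain c e where p: "p = (c, e)" by (cases p)
  have h: "c < n" "0 < e" "e < k" "reduced_word n k r" "r = [] \<or> fst (hd r) \<noteq> c"
    using Cons.prems p by (auto simp: red_Cons)
  obtain T where T: "digraph_aut (DD n k) (arcD k) T" "\<forall>i<n. T ([], i) = (r, i)" using Cons.IH h(4) by blast
  have "digraph_aut (DD n k) (arcD k) ((LL k c ^^ e) \<circ> T)"
    using aut_comp[OF aut_pow[OF aut_LL[OF h(1)]] T(1)] .
  moreover have "\<forall>i<n. ((LL k c ^^ e) \<circ> T) ([], i) = (p # r, i)"
    using T(2) LL_pow lmul_pow[OF h(2,3,5)] p by simp
  ultimately show ?case by blast
qed

end

definition tau :: "nat \<Rightarrow> nat \<Rightarrow> nat \<Rightarrow> nat" where
  "tau j j' c = (if c = j then j' else if c = j' then j else c)"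

definition tmap :: "nat \<Rightarrow> nat \<Rightarrow> (nat \<times> nat) list \<Rightarrow> (nat \<times> nat) list" where
  "tmap j j' w = map (\<lambda>p. (tau j j' (fst p), snd p)) w"

definition inb :: "nat \<Rightarrow> nat \<Rightarrow> ((nat \<times> nat) list \<times> nat) \<Rightarrow> bool" where
  "inb j j' x \<longleftrightarrow> (if fst x = [] then snd x \<in> {j, j'} else fst (hd (fst x)) \<in> {j, j'})"

definition Sw :: "nat \<Rightarrow> nat \<Rightarrow> ((nat \<times> nat) list \<times> nat) \<Rightarrow> ((nat \<times> nat) list \<times> nat)" where
  "Sw j j' x = (if inb j j' x then (tmap j j' (fst x), tau j j' (snd x)) else x)"

lemma tau_tau[simp]: "tau j j' (tau j j' c) = c" by (simp add: tau_def)
lemma tau_eq[simp]: "tau j j' a = tau j j' b \<longleftrightarrow> a = b" by (auto simp: tau_def)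
lemma tau_mem[simp]: "tau j j' c \<in> {j, j'} \<longleftrightarrow> c \<in> {j, j'}" by (auto simp: tau_def)
lemma tau_mem2[simp]: "tau j j' c = j \<or> tau j j' c = j' \<longleftrightarrow> c = j \<or> c = j'" by (auto simp: tau_def)
lemma tau_lt: "c < n \<Longrightarrow> j < n \<Longrightarrow> j' < n \<Longrightarrow> tau j j' c < n" by (simp add: tau_def)

lemma tmap_tmap[simp]: "tmap j j' (tmap j j' w) = w" by (induction w) (auto simp: tmap_def)
lemma tmap_Nil[simp]: "tmap j j' w = [] \<longleftrightarrow> w = []" by (simp add: tmap_def)
lemma tmap_inj: "tmap j j' a = tmap j j' b \<longleftrightarrow> a = b" by (metis tmap_tmap)
lemma tmap_hd: "w \<noteq> [] \<Longrightarrow> fst (hd (tmap j j' w)) = tau j j' (fst (hd w))"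
  by (cases w) (auto simp: tmap_def)
lemma tmap_append: "tmap j j' (a @ b) = tmap j j' a @ tmap j j' b" by (simp add: tmap_def)
lemma tmap_single: "tmap j j' [(c, e)] = [(tau j j' c, e)]" by (simp add: tmap_def)

lemma tmap_red:
  assumes "reduced_word n k w" "j < n" "j' < n"
  shows "reduced_word n k (tmap j j' w)"
  using assms
proof (induction w)
  case Nil then show ?case by (simp add: tmap_def)
next
  case (Cons p w)
  then show ?case using tmap_hd[of w j j'] tau_lt
    by (auto simp: red_Cons tmap_def)
qed

lemma mul_gen_tmap: "mul_gen k (tmap j j' w) (tau j j' c) = tmap j j' (mul_gen k w c)"
proof (cases w rule: rev_exhaust)
  case Nil then show ?thesis by (simp add: tmap_def)
next
  case (snoc w' q)
  have "tmap j j' w = tmap j j' w' @ [(tau j j' (fst q), snd q)]" using snoc by (simp add: tmap_def)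
  then have "mul_gen k (tmap j j' w) (tau j j' c) = tmap j j' w' @ post k (tau j j' (fst q), snd q) (tau j j' c)"
    using mul_gen_snoc by simp
  also have "\<dots> = tmap j j' (w' @ post k q c)" by (simp add: post_def tmap_def)
  also have "\<dots> = tmap j j' (mul_gen k w c)" using snoc mul_gen_snoc by simp
  finally show ?thesis .
qed

lemma inb_t: "inb j j' (tmap j j' v, tau j j' i) = inb j j' (v, i)"
  by (cases "v = []") (auto simp: inb_def tmap_hd tau_def)

lemma inb_Sw[simp]: "inb j j' (Sw j j' x) = inb j j' x"
  by (cases x) (simp add: Sw_def inb_t)

lemma Sw_Sw[simp]: "Sw j j' (Sw j j' x) = x"
  by (cases x) (simp add: Sw_def inb_t)

context
  fixes n k :: nat
  assumes k2: "2 \<le> k"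
begin

lemma mul_gen_last: "mul_gen k [(c, k - 1)] c = []"
  using k2 by (simp add: mul_gen_def)

lemma Sw_DD: "j < n \<Longrightarrow> j' < n \<Longrightarrow> x \<in> DD n k \<Longrightarrow> Sw j j' x \<in> DD n k"
  by (auto simp: Sw_def DD_iff tmap_red tau_lt)

lemma mixed1:
  assumes "x \<in> DD n k" "y \<in> DD n k" "arcD k x y" "\<not> inb j j' x" "inb j j' y"
  shows "fst x = [] \<and> snd x \<notin> {j, j'} \<and> (\<exists>c. c \<in> {j, j'} \<and> y = ([(c, k - 1)], c))"
proof -
  have ry: "reduced_word n k (fst y)" using assms(2) by (simp add: DD_iff)
  have fx: "fst x = mul_gen k (fst y) (snd y)" using assms(3) by (simp add: arcD_def)
  have ne: "fst y \<noteq> []"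
  proof
    assume "fst y = []"
    then have "fst x = [(snd y, 1)]" "snd y \<in> {j, j'}" using fx assms(5) by (auto simp: inb_def)
    then show False using assms(4) by (auto simp: inb_def)
  qed
  have hy: "fst (hd (fst y)) \<in> {j, j'}" using ne assms(5) by (simp add: inb_def)
  have e: "fst x = []"
  proof (rule ccontr)
    assume "fst x \<noteq> []"
    then have "fst (hd (fst x)) = fst (hd (fst y))" using mul_gen_hd[OF ne] fx by simp
    then show False using assms(4) hy \<open>fst x \<noteq> []\<close> by (simp add: inb_def)
  qed
  then have "fst y = [(snd y, k - 1)]" using mul_gen_empty[OF ry k2] fx by simp
  then have "y = ([(snd y, k - 1)], snd y)" "snd y \<in> {j, j'}" using hy by (cases y, simp)+
  then show ?thesis using e assms(4) by (auto simp: inb_def)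
qed

lemma mixed2:
  assumes "x \<in> DD n k" "y \<in> DD n k" "arcD k x y" "inb j j' x" "\<not> inb j j' y"
  shows "fst x = [] \<and> snd x \<in> {j, j'} \<and> (\<exists>d. d \<notin> {j, j'} \<and> y = ([(d, k - 1)], d))"
proof -
  have ry: "reduced_word n k (fst y)" using assms(2) by (simp add: DD_iff)
  have fx: "fst x = mul_gen k (fst y) (snd y)" using assms(3) by (simp add: arcD_def)
  have ne: "fst y \<noteq> []"
  proof
    assume "fst y = []"
    then have "fst x = [(snd y, 1)]" using fx by simp
    then have "snd y \<in> {j, j'}" using assms(4) by (simp add: inb_def)
    then show False using assms(5) \<open>fst y = []\<close> by (simp add: inb_def)
  qed
  have hy: "fst (hd (fst y)) \<notin> {j, j'}" using ne assms(5) by (simp add: inb_def)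
  have e: "fst x = []"
  proof (rule ccontr)
    assume "fst x \<noteq> []"
    then have "fst (hd (fst x)) = fst (hd (fst y))" using mul_gen_hd[OF ne] fx by simp
    then show False using assms(4) hy \<open>fst x \<noteq> []\<close> by (simp add: inb_def)
  qed
  then have "fst y = [(snd y, k - 1)]" using mul_gen_empty[OF ry k2] fx by simp
  then have "y = ([(snd y, k - 1)], snd y)" "snd y \<notin> {j, j'}" using hy by (cases y, simp)+
  then show ?thesis using e assms(4) by (auto simp: inb_def)
qed

lemma Sw_arc:
  assumes "j < n" "j' < n" "x \<in> DD n k" "y \<in> DD n k" "arcD k x y"
  shows "arcD k (Sw j j' x) (Sw j j' y)"
proof (cases "inb j j' x")
  case True
  show ?thesis
  proof (cases "inb j j' y")
    case True
    then show ?thesis using \<open>inb j j' x\<close> assms(5) mul_gen_tmap[of k j j' "fst y" "snd y"]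
      by (simp add: Sw_def arcD_def)
  next
    case False
    from mixed2[OF assms(3,4,5) \<open>inb j j' x\<close> False] obtain d where
      d: "fst x = []" "snd x \<in> {j, j'}" "d \<notin> {j, j'}" "y = ([(d, k - 1)], d)" by blast
    have "tau j j' (snd x) \<in> {j, j'}" using d(2) by simp
    then have t: "tau j j' (snd x) \<noteq> d" using d(3) by blast
    have sx: "Sw j j' x = ([], tau j j' (snd x))" using True d(1) by (cases x) (simp add: Sw_def tmap_def)
    have sy: "Sw j j' y = y" using False by (simp add: Sw_def)
    show ?thesis unfolding sx sy using t mul_gen_last[of d] by (simp add: arcD_def d(4))
  qed
next
  case False
  show ?thesis
  proof (cases "inb j j' y")
    case True
    from mixed1[OF assms(3,4,5) False True] obtain c where
      c: "fst x = []" "snd x \<notin> {j, j'}" "c \<in> {j, j'}" "y = ([(c, k - 1)], c)" by blast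
    have "tau j j' c \<in> {j, j'}" using c(3) by simp
    then have t: "snd x \<noteq> tau j j' c" using c(2) by metis
    have sx: "Sw j j' x = x" using False by (simp add: Sw_def)
    have sy: "Sw j j' y = ([(tau j j' c, k - 1)], tau j j' c)" using True c(4) by (simp add: Sw_def tmap_single)
    show ?thesis unfolding sx sy using t c(1) mul_gen_last[of "tau j j' c"] by (simp add: arcD_def)
  next
    case False
    then show ?thesis using \<open>\<not> inb j j' x\<close> assms(5) by (simp add: Sw_def)
  qed
qed

lemma aut_Sw:
  assumes "j < n" "j' < n"
  shows "digraph_aut (DD n k) (arcD k) (Sw j j')"
  unfolding digraph_aut_def
proof
  show "bij_betw (Sw j j') (DD n k) (DD n k)"
    by (rule bij_betw_byWitness[where f' = "Sw j j'"]) (use Sw_DD[OF assms] in auto)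
  show "\<forall>x\<in>DD n k. \<forall>y\<in>DD n k. arcD k x y = arcD k (Sw j j' x) (Sw j j' y)"
  proof (intro ballI iffI)
    fix x y assume "x \<in> DD n k" "y \<in> DD n k"
    { assume "arcD k x y" then show "arcD k (Sw j j' x) (Sw j j' y)" using Sw_arc assms \<open>x \<in> DD n k\<close> \<open>y \<in> DD n k\<close> by blast }
    { assume "arcD k (Sw j j' x) (Sw j j' y)"
      then have "arcD k (Sw j j' (Sw j j' x)) (Sw j j' (Sw j j' y))"
        using Sw_arc[OF assms Sw_DD[OF assms \<open>x \<in> DD n k\<close>] Sw_DD[OF assms \<open>y \<in> DD n k\<close>]] by blast
      then show "arcD k x y" by simp }
  qed
qed

end

lemma conn_image:
  assumes T: "digraph_aut V A T" and SV: "S \<subseteq> V" and c: "underlying_connected A S"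
  shows "underlying_connected A (T ` S)"
  unfolding underlying_connected_def
proof (intro ballI)
  fix a' b' assume "a' \<in> T ` S" "b' \<in> T ` S"
  then obtain a b where ab: "a \<in> S" "b \<in> S" "a' = T a" "b' = T b" by auto
  have "(a, b) \<in> (UR A S)\<^sup>*" using c ab unfolding underlying_connected_def UR_def by blast
  moreover have "\<And>u w. (u, w) \<in> UR A S \<Longrightarrow> (T u, T w) \<in> UR A (T ` S)"
    using T SV unfolding UR_def digraph_aut_def by (auto simp: subset_iff)
  ultimately have "(T a, T b) \<in> (UR A (T ` S))\<^sup>*" using rtrancl_map by metis
  then show "(a', b') \<in> {(u, w). u \<in> T ` S \<and> w \<in> T ` S \<and> (A u w \<or> A w u)}\<^sup>*"
    using ab unfolding UR_def by simp
qed

lemma conj_ext: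
  assumes T: "digraph_aut V A T" and SV: "S \<subseteq> V" and x: "x \<in> V" and x': "x' \<in> V"
    and g0: "digraph_aut V A g0" "\<forall>y\<in>inv_into V T ` S. g0 y = y" "g0 (inv_into V T x) = inv_into V T x'"
  shows "\<exists>g. digraph_aut V A g \<and> (\<forall>y\<in>S. g y = y) \<and> g x = x'"
proof -
  define Ti where "Ti = inv_into V T"
  have Ti: "digraph_aut V A Ti" using aut_inv(1)[OF T] Ti_def by simp
  have r: "\<And>y. y \<in> V \<Longrightarrow> T (Ti y) = y" using aut_inv(3)[OF T] Ti_def by simp
  have "digraph_aut V A (T \<circ> g0 \<circ> Ti)" using aut_comp[OF aut_comp[OF T g0(1)] Ti] .
  moreover have "\<forall>y\<in>S. (T \<circ> g0 \<circ> Ti) y = y" using g0(2) r SV Ti_def by auto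
  moreover have "(T \<circ> g0 \<circ> Ti) x = x'" using g0(3) r x' Ti_def by simp
  ultimately show ?thesis by blast
qed

context
  fixes n k :: nat
  assumes k2: "2 \<le> k"
begin

lemma root_fix:
  assumes jj: "j < n" "j' < n" and SD: "S \<subseteq> DD n k" and c: "underlying_connected (arcD k) S"
    and z: "z \<in> S" "\<not> inb j j' z"
    and nS: "([], j) \<notin> S" "([], j') \<notin> S" "([(j, k - 1)], j) \<notin> S" "([(j', k - 1)], j') \<notin> S"
  shows "\<forall>y\<in>S. \<not> inb j j' y"
proof
  fix y assume y: "y \<in> S"
  have "(z, y) \<in> (UR (arcD k) S)\<^sup>*" using c z y unfolding underlying_connected_def UR_def by blast
  then show "\<not> inb j j' y"
  proof (induction rule: rtrancl_induct)
    case base then show ?case using z by simp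
  next
    case (step u w)
    have uw: "u \<in> S" "w \<in> S" "arcD k u w \<or> arcD k w u" using step(2) by (auto simp: UR_def)
    have D: "u \<in> DD n k" "w \<in> DD n k" using uw SD by auto
    show ?case
    proof
      assume iw: "inb j j' w"
      show False
      proof (cases "arcD k u w")
        case True
        from mixed1[OF k2 D True step(3) iw] obtain c where "c \<in> {j, j'}" "w = ([(c, k - 1)], c)" by blast
        then show False using uw(2) nS by auto
      next
        case False
        then have "arcD k w u" using uw(3) by simp
        from mixed2[OF k2 D(2,1) this iw step(3)] have "w = ([], snd w)" "snd w \<in> {j, j'}"
          by (cases w, simp)+
        then show False using uw(2) nS by (metis insert_iff singletonD)
      qed
    qed
  qed
qed

lemma root_ext:
  assumes jj: "j < n" "j' < n" and SD: "S \<subseteq> DD n k" and c: "underlying_connected (arcD k) S"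
    and z: "z \<in> S" "\<not> inb j j' z"
    and x: "x \<notin> S" "x' \<notin> S"
    and nb: "\<forall>y\<in>S. (arcD k x y \<longleftrightarrow> arcD k x' y) \<and> (arcD k y x \<longleftrightarrow> arcD k y x')"
    and xx: "(x = ([], j) \<and> x' = ([], j')) \<or> (x = ([(j, k - 1)], j) \<and> x' = ([(j', k - 1)], j'))"
    and jne: "j \<noteq> j'"
  shows "\<exists>g. digraph_aut (DD n k) (arcD k) g \<and> (\<forall>y\<in>S. g y = y) \<and> g x = x'"
proof -
  have ml: "\<And>c. mul_gen k [(c, k - 1)] c = []" using mul_gen_last[OF k2] .
  have nS: "([], j) \<notin> S \<and> ([], j') \<notin> S \<and> ([(j, k - 1)], j) \<notin> S \<and> ([(j', k - 1)], j') \<notin> S"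
    using xx
  proof
    assume a: "x = ([], j) \<and> x' = ([], j')"
    have 1: "([(j, k - 1)], j) \<notin> S"
    proof
      assume h: "([(j, k - 1)], j) \<in> S"
      have "arcD k x' ([(j, k - 1)], j)" using a jne ml by (simp add: arcD_def)
      then have "arcD k x ([(j, k - 1)], j)" using nb h by blast
      then show False using a by (simp add: arcD_def)
    qed
    have 2: "([(j', k - 1)], j') \<notin> S"
    proof
      assume h: "([(j', k - 1)], j') \<in> S"
      have "arcD k x ([(j', k - 1)], j')" using a jne ml by (simp add: arcD_def)
      then have "arcD k x' ([(j', k - 1)], j')" using nb h by blast
      then show False using a by (simp add: arcD_def)
    qed
    show ?thesis using 1 2 a x by auto
  next
    assume a: "x = ([(j, k - 1)], j) \<and> x' = ([(j', k - 1)], j')"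
    have 1: "([], j) \<notin> S"
    proof
      assume h: "([], j) \<in> S"
      have "arcD k ([], j) x'" using a jne ml by (simp add: arcD_def)
      then have "arcD k ([], j) x" using nb h by blast
      then show False using a by (simp add: arcD_def)
    qed
    have 2: "([], j') \<notin> S"
    proof
      assume h: "([], j') \<in> S"
      have "arcD k ([], j') x" using a jne ml by (simp add: arcD_def)
      then have "arcD k ([], j') x'" using nb h by blast
      then show False using a by (simp add: arcD_def)
    qed
    show ?thesis using 1 2 a x by auto
  qed
  have fx0: "\<forall>y\<in>S. \<not> inb j j' y" using root_fix[OF jj SD c z] nS by blast
  have "\<forall>y\<in>S. Sw j j' y = y" using fx0 by (simp add: Sw_def)
  moreover have "Sw j j' x = x'" using xx by (auto simp: Sw_def inb_def tau_def tmap_def)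
  ultimately show ?thesis using aut_Sw[OF k2 jj] by blast
qed

lemma ext_main:
  assumes SD: "S \<subseteq> DD n k" and c: "underlying_connected (arcD k) S" and z: "z \<in> S"
    and x: "x \<in> DD n k" "x \<notin> S" and x': "x' \<in> DD n k" "x' \<notin> S"
    and nb: "\<forall>y\<in>S. (arcD k x y \<longleftrightarrow> arcD k x' y) \<and> (arcD k y x \<longleftrightarrow> arcD k y x')"
    and adj: "arcD k x z \<or> arcD k z x"
  shows "\<exists>g. digraph_aut (DD n k) (arcD k) g \<and> (\<forall>y\<in>S. g y = y) \<and> g x = x'"
proof (cases "x = x'")
  case True then show ?thesis using aut_id[of "DD n k" "arcD k"] by auto
next
  case False
  have ml: "\<And>c. mul_gen k [(c, k - 1)] c = []" using mul_gen_last[OF k2] .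
  have zD: "z \<in> DD n k" using z SD by auto
  obtain b where b: "b = (if arcD k x z then fst x else fst z)" by simp
  have rb: "reduced_word n k b" using b x zD by (simp add: DD_iff)
  obtain T where T: "digraph_aut (DD n k) (arcD k) T" "\<forall>i<n. T ([], i) = (b, i)"
    using trans_root[OF k2 rb] by blast
  define Ti where "Ti = inv_into (DD n k) T"
  have TiA: "digraph_aut (DD n k) (arcD k) Ti" using aut_inv(1)[OF T(1)] Ti_def by simp
  have TiT: "\<And>y. y \<in> DD n k \<Longrightarrow> Ti (T y) = y" using aut_inv(2)[OF T(1)] Ti_def by simp
  have TiD: "\<And>y. y \<in> DD n k \<Longrightarrow> Ti y \<in> DD n k" using aut_inv(4)[OF T(1)] Ti_def by simp
  have Tiarc: "\<And>a c. a \<in> DD n k \<Longrightarrow> c \<in> DD n k \<Longrightarrow> arcD k a c \<longleftrightarrow> arcD k (Ti a) (Ti c)"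
    using TiA by (simp add: digraph_aut_def)
  have Tiinj: "\<And>a c. a \<in> DD n k \<Longrightarrow> c \<in> DD n k \<Longrightarrow> Ti a = Ti c \<Longrightarrow> a = c"
    using TiA unfolding digraph_aut_def bij_betw_def inj_on_def by blast
  have Tib: "\<And>i. i < n \<Longrightarrow> Ti (b, i) = ([], i)" using T(2) TiT by (metis DD_iff fst_conv red_Nil snd_conv)
  define S0 where "S0 = Ti ` S"
  have S0D: "S0 \<subseteq> DD n k" using SD TiD S0_def by auto
  have c0: "underlying_connected (arcD k) S0" using conn_image[OF TiA SD c] S0_def by simp
  have z0: "Ti z \<in> S0" using z S0_def by simp
  have x0: "Ti x \<notin> S0" "Ti x' \<notin> S0" unfolding S0_def using x x' SD Tiinj by (metis image_iff subsetD)+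
  have nb0: "\<forall>y\<in>S0. (arcD k (Ti x) y \<longleftrightarrow> arcD k (Ti x') y) \<and> (arcD k y (Ti x) \<longleftrightarrow> arcD k y (Ti x'))"
  proof
    fix y0 assume "y0 \<in> S0"
    then obtain y where y: "y \<in> S" "y0 = Ti y" using S0_def by auto
    have yD: "y \<in> DD n k" using y SD by auto
    show "(arcD k (Ti x) y0 \<longleftrightarrow> arcD k (Ti x') y0) \<and> (arcD k y0 (Ti x) \<longleftrightarrow> arcD k y0 (Ti x'))"
      using nb y Tiarc[OF x(1) yD] Tiarc[OF x'(1) yD] Tiarc[OF yD x(1)] Tiarc[OF yD x'(1)] by simp
  qed
  have xne: "Ti x \<noteq> Ti x'" using False Tiinj x x' by blast
  obtain g0 where g0: "digraph_aut (DD n k) (arcD k) g0" "\<forall>y\<in>S0. g0 y = y" "g0 (Ti x) = Ti x'"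
  proof (cases "arcD k x z")
    case True
    have fx: "fst x = b" using b True by simp
    have "arcD k x' z" using True nb z by blast
    then have fx': "fst x' = b" using True fx by (simp add: arcD_def)
    define j where "j = snd x"
    define j' where "j' = snd x'"
    have jj: "j < n" "j' < n" using x x' j_def j'_def by (auto simp: DD_iff)
    have ex: "Ti x = ([], j)" using Tib[OF jj(1)] fx j_def by (metis prod.collapse)
    have ex': "Ti x' = ([], j')" using Tib[OF jj(2)] fx' j'_def by (metis prod.collapse)
    have jne: "j \<noteq> j'" using xne ex ex' by auto
    have a1: "arcD k ([], j) (Ti z)" using True Tiarc[OF x(1) zD] ex by simp
    have a2: "arcD k ([], j') (Ti z)" using nb0 z0 a1 ex ex' by auto
    have rz: "reduced_word n k (fst (Ti z))" using TiD[OF zD] by (simp add: DD_iff)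
    have "fst (Ti z) = [(snd (Ti z), k - 1)]" using a1 mul_gen_empty[OF rz k2] by (simp add: arcD_def)
    then have "\<not> inb j j' (Ti z)" using a1 a2 by (simp add: arcD_def inb_def)
    from root_ext[OF jj S0D c0 z0 this x0 nb0 _ jne] ex ex' that show ?thesis by blast
  next
    case False
    then have zx: "arcD k z x" using adj by simp
    have fz: "fst z = b" using b False by simp
    have zx': "arcD k z x'" using zx nb z by blast
    define c where "c = snd z"
    have cn: "c < n" using zD c_def by (simp add: DD_iff)
    have ez: "Ti z = ([], c)" using Tib[OF cn] fz c_def by (metis prod.collapse)
    have a1: "arcD k ([], c) (Ti x)" using zx Tiarc[OF zD x(1)] ez by simp
    have a2: "arcD k ([], c) (Ti x')" using zx' Tiarc[OF zD x'(1)] ez by simp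
    define j where "j = snd (Ti x)"
    define j' where "j' = snd (Ti x')"
    have r1: "reduced_word n k (fst (Ti x))" using TiD[OF x(1)] by (simp add: DD_iff)
    have r2: "reduced_word n k (fst (Ti x'))" using TiD[OF x'(1)] by (simp add: DD_iff)
    have jj: "j < n" "j' < n" using TiD[OF x(1)] TiD[OF x'(1)] j_def j'_def by (auto simp: DD_iff)
    have ex: "Ti x = ([(j, k - 1)], j)"
      using a1 mul_gen_empty[OF r1 k2] j_def by (simp add: arcD_def) (metis prod.collapse)
    have ex': "Ti x' = ([(j', k - 1)], j')"
      using a2 mul_gen_empty[OF r2 k2] j'_def by (simp add: arcD_def) (metis prod.collapse)
    have jne: "j \<noteq> j'" using xne ex ex' by auto
    have "\<not> inb j j' (Ti z)" using a1 a2 ez j_def j'_def by (simp add: arcD_def inb_def)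
    from root_ext[OF jj S0D c0 z0 this x0 nb0 _ jne] ex ex' that show ?thesis by blast
  qed
  show ?thesis using conj_ext[OF T(1) SD x(1) x'(1) g0(1)] g0(2,3) S0_def Ti_def by blast
qed

lemma trans_all:
  assumes "x \<in> DD n k" "x' \<in> DD n k"
  shows "\<exists>g. digraph_aut (DD n k) (arcD k) g \<and> g x = x'"
proof -
  obtain v i v' i' where e: "x = (v, i)" "x' = (v', i')" by (cases x, cases x')
  have h: "reduced_word n k v" "i < n" "reduced_word n k v'" "i' < n" using assms e by (auto simp: DD_iff)
  obtain T where T: "digraph_aut (DD n k) (arcD k) T" "\<forall>i<n. T ([], i) = (v, i)"
    using trans_root[OF k2 h(1)] by blast
  obtain T' where T': "digraph_aut (DD n k) (arcD k) T'" "\<forall>i<n. T' ([], i) = (v', i)"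
    using trans_root[OF k2 h(3)] by blast
  define Ti where "Ti = inv_into (DD n k) T"
  have TiA: "digraph_aut (DD n k) (arcD k) Ti" using aut_inv(1)[OF T(1)] Ti_def by simp
  have "Ti x = ([], i)" using aut_inv(2)[OF T(1), of "([], i)"] T(2) h(2) e Ti_def by (simp add: DD_iff)
  moreover have "Sw i i' ([], i) = ([], i')" by (simp add: Sw_def inb_def tau_def)
  moreover have "T' ([], i') = x'" using T'(2) h(4) e by simp
  ultimately have "(T' \<circ> Sw i i' \<circ> Ti) x = x'" by simp
  moreover have "digraph_aut (DD n k) (arcD k) (T' \<circ> Sw i i' \<circ> Ti)"
    using aut_comp[OF aut_comp[OF T'(1) aut_Sw[OF k2 h(2,4)]] TiA] .
  ultimately show ?thesis by blast
qed

lemma ch_DD: "connected_homogeneous (DD n k) (arcD k)"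
  by (rule ch_from_ext) (use trans_all ext_main in blast)+

end

definition rep :: "nat \<Rightarrow> ((nat \<times> nat) list \<times> nat) \<Rightarrow> dc_vertex set" where
  "rep k x = M_class k (fst x) (snd x)"

lemma M_vertices_rep: "M_vertices n k = rep k ` DD n k"
  by (auto simp: M_vertices_def rep_def DD_def image_def)

lemma rep_inj: "inj_on (rep k) (DD n k)"
  unfolding inj_on_def rep_def M_class_def by (auto simp: doubleton_eq_iff prod_eq_iff)

lemma M_arc_rep:
  assumes "x \<in> DD n k" "y \<in> DD n k"
  shows "M_arc n k (rep k x) (rep k y) \<longleftrightarrow> arcD k x y"
  using assms unfolding M_arc_def rep_def M_class_def dc_arc_def arcD_def DD_iff
  by (cases x; cases y) auto

theorem proposition5p3:
  fixes n k :: nat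
  assumes "n \<ge> 3" and "k \<ge> 2"
  shows "connected_homogeneous (M_vertices n k) (M_arc n k)"
proof -
  have "connected_homogeneous (DD n k) (arcD k)" using ch_DD[OF assms(2)] .
  then have "connected_homogeneous (DD n k) (\<lambda>x y. M_arc n k (rep k x) (rep k y))"
    using ch_cong[of "DD n k" "\<lambda>x y. M_arc n k (rep k x) (rep k y)" "arcD k"] M_arc_rep by blast
  then show ?thesis unfolding M_vertices_rep using ch_transfer[OF rep_inj] by blast
qed

end
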